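(* Let $p>1$, let $\varphi:\mathbb{R}^n\to\mathbb{R}\cup\{+\infty\}$ be proper and lower semicontinuous, and let $\bar x\in\operatorname{dom}\varphi$. Then: (a) if $\bar x\in\operatorname{argmin}\varphi$, then $\bar x$ is a $p$-calm point of $\varphi$ with any constant $M>0$; (b) if $\operatorname{prox}^p_{\gamma\varphi}(\bar x)=\{\bar x\}$ (for some $\gamma>0$), then $\bar x$ is a $p$-calm point of $\varphi$ with constant $M=\frac{1}{p\gamma}$; (c) if $\bar x$ is a $p$-calm point of $\varphi$ with constant $M$, then for each $\gamma\in(0,\frac{1}{pM}]$, $\operatorname{prox}^p_{\gamma\varphi}(\bar x)=\{\bar x\}$; (d) if for some $\hat\gamma>0$, $\bar x\in\mathrm{Fix}(\operatorname{prox}^p_{\hat\gamma\varphi})$, then for each $\gamma\in(0,\hat\gamma)$, $\operatorname{prox}^p_{\gamma\varphi}(\bar x)=\{\bar x\}$, and hence $\bar x$ is a $p$-calm point of $\varphi$ with constant $M=\frac{1}{p\gamma}$; (e) if $\bar x$ is a $p$-calm point of $\varphi$, then $\varphi$ is high-order prox-bounded.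
   Context: $\operatorname{prox}^p_{\gamma\varphi}(x):=\operatorname{argmin}_{y}\big(\varphi(y)+\frac{1}{p\gamma}\|x-y\|^p\big)$; $\mathrm{Fix}(\operatorname{prox}^p_{\gamma\varphi})=\{x:x\in\operatorname{prox}^p_{\gamma\varphi}(x)\}$. A point $\bar x\in\operatorname{dom}\varphi$ is a $p$-calm point of $\varphi$ with constant $M>0$ if $\varphi(x)+M\|x-\bar x\|^p>\varphi(\bar x)$ for all $x\neq\bar x$. $\varphi$ is high-order prox-bounded (order $p$) if $\inf_y\big(\varphi(y)+\frac{1}{p\gamma}\|x-y\|^p\big)>-\infty$ for some $\gamma>0$ and $x\in\mathbb{R}^n$. *)

theory Defs
  imports "HOL-Analysis.Analysis" "HOL-Library.Extended_Real" "HOL-Library.Liminf_Limsup"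
begin

(* Extended-real-valued functions phi : R^n -> R \<union> {+\<infinity>} are modelled as ereal-valued
   functions; properness excludes the value -\<infinity> and requires a nonempty domain. *)

definition edom :: "('a \<Rightarrow> ereal) \<Rightarrow> 'a set" where
  "edom \<phi> = {x. \<phi> x < \<infinity>}"

definition proper_fun :: "('a \<Rightarrow> ereal) \<Rightarrow> bool" where
  "proper_fun \<phi> \<longleftrightarrow> (\<forall>x. \<phi> x \<noteq> -\<infinity>) \<and> edom \<phi> \<noteq> {}"

definition lsc_fun :: "('a::topological_space \<Rightarrow> ereal) \<Rightarrow> bool" where
  "lsc_fun \<phi> \<longleftrightarrow> (\<forall>x. \<phi> x \<le> Liminf (at x) \<phi>)"

definition argmin_set :: "('a \<Rightarrow> ereal) \<Rightarrow> 'a set" where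
  "argmin_set \<phi> = {y. \<forall>z. \<phi> y \<le> \<phi> z}"

definition hobj :: "real \<Rightarrow> real \<Rightarrow> ('a::real_normed_vector \<Rightarrow> ereal) \<Rightarrow> 'a \<Rightarrow> 'a \<Rightarrow> ereal" where
  "hobj p \<gamma> \<phi> x y = \<phi> y + ereal (1 / (p * \<gamma>) * norm (x - y) powr p)"

definition hprox :: "real \<Rightarrow> real \<Rightarrow> ('a::real_normed_vector \<Rightarrow> ereal) \<Rightarrow> 'a \<Rightarrow> 'a set" where
  "hprox p \<gamma> \<phi> x = argmin_set (hobj p \<gamma> \<phi> x)"

definition hprox_fix :: "real \<Rightarrow> real \<Rightarrow> ('a::real_normed_vector \<Rightarrow> ereal) \<Rightarrow> 'a set" where
  "hprox_fix p \<gamma> \<phi> = {x. x \<in> hprox p \<gamma> \<phi> x}"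

definition p_calm :: "real \<Rightarrow> ('a::real_normed_vector \<Rightarrow> ereal) \<Rightarrow> real \<Rightarrow> 'a \<Rightarrow> bool" where
  "p_calm p \<phi> M xb \<longleftrightarrow> xb \<in> edom \<phi> \<and> M > 0 \<and>
     (\<forall>x. x \<noteq> xb \<longrightarrow> \<phi> x + ereal (M * norm (x - xb) powr p) > \<phi> xb)"

definition ho_prox_bounded :: "real \<Rightarrow> ('a::real_normed_vector \<Rightarrow> ereal) \<Rightarrow> bool" where
  "ho_prox_bounded p \<phi> \<longleftrightarrow> (\<exists>\<gamma>>0. \<exists>x. (INF y. hobj p \<gamma> \<phi> x y) > -\<infinity>)"

end

theory Submission
  imports Defs
begin

lemma ereal_add_real_less:
  fixes a :: ereal
  assumes "a \<noteq> -\<infinity>" "a \<noteq> \<infinity>" "c < d"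
  shows "a + ereal c < a + ereal d"
  using assms by (cases a) auto

lemma ereal_add_real_le:
  fixes a :: ereal
  assumes "c \<le> d"
  shows "a + ereal c \<le> a + ereal d"
  using assms by (intro add_left_mono) simp

lemma L1:
  fixes \<phi> :: "'a::real_normed_vector \<Rightarrow> ereal"
  assumes calm: "p_calm p \<phi> M xb" and g: "0 < \<gamma>" "\<gamma> \<le> 1 / (p * M)" and p: "p > 0"
  shows "hprox p \<gamma> \<phi> xb = {xb}"
proof -
  have M: "M > 0" using calm by (simp add: p_calm_def)
  have cM: "M \<le> 1 / (p * \<gamma>)"
    using g M p by (simp add: field_simps)
  have key: "hobj p \<gamma> \<phi> xb y > hobj p \<gamma> \<phi> xb xb" if "y \<noteq> xb" for y
  proof -
    have "\<phi> xb < \<phi> y + ereal (M * norm (y - xb) powr p)"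
      using calm that by (simp add: p_calm_def)
    also have "\<dots> \<le> \<phi> y + ereal (1 / (p * \<gamma>) * norm (xb - y) powr p)"
      using mult_right_mono[OF cM, of "norm (y - xb) powr p"]
      by (intro ereal_add_real_le) (simp add: norm_minus_commute)
    finally show ?thesis by (simp add: hobj_def)
  qed
  show ?thesis
  proof
    show "hprox p \<gamma> \<phi> xb \<subseteq> {xb}"
    proof
      fix y assume "y \<in> hprox p \<gamma> \<phi> xb"
      then have "hobj p \<gamma> \<phi> xb y \<le> hobj p \<gamma> \<phi> xb xb"
        by (simp add: hprox_def argmin_set_def)
      then show "y \<in> {xb}" using key[of y] by force
    qed
    show "{xb} \<subseteq> hprox p \<gamma> \<phi> xb"
      using key by (auto simp: hprox_def argmin_set_def intro: less_imp_le)
        (metis key less_imp_le order_refl)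
  qed
qed

lemma L2:
  fixes \<phi> :: "'a::real_normed_vector \<Rightarrow> ereal"
  assumes h: "hprox p \<gamma> \<phi> xb = {xb}" and g: "0 < \<gamma>" and p: "p > 0" and e: "xb \<in> edom \<phi>"
  shows "p_calm p \<phi> (1 / (p * \<gamma>)) xb"
  unfolding p_calm_def
proof (intro conjI allI impI)
  show "xb \<in> edom \<phi>" by fact
  show "0 < 1 / (p * \<gamma>)" using g p by simp
  fix x assume "x \<noteq> xb"
  then have "x \<notin> hprox p \<gamma> \<phi> xb" using h by auto
  then obtain z where z: "hobj p \<gamma> \<phi> xb z < hobj p \<gamma> \<phi> xb x"
    by (auto simp: hprox_def argmin_set_def not_le)
  have "xb \<in> hprox p \<gamma> \<phi> xb" using h by auto
  then have "hobj p \<gamma> \<phi> xb xb \<le> hobj p \<gamma> \<phi> xb z"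
    by (simp add: hprox_def argmin_set_def)
  with z have "hobj p \<gamma> \<phi> xb xb < hobj p \<gamma> \<phi> xb x" by simp
  then show "\<phi> xb < \<phi> x + ereal (1 / (p * \<gamma>) * norm (x - xb) powr p)"
    using p by (simp add: hobj_def norm_minus_commute)
qed

lemma L3:
  fixes \<phi> :: "'a::real_normed_vector \<Rightarrow> ereal"
  assumes h: "xb \<in> hprox p \<gamma>h \<phi> xb" and g: "0 < \<gamma>" "\<gamma> < \<gamma>h" and p: "p > 0"
    and e: "xb \<in> edom \<phi>" and pr: "proper_fun \<phi>"
  shows "p_calm p \<phi> (1 / (p * \<gamma>)) xb"
  unfolding p_calm_def
proof (intro conjI allI impI)
  show "xb \<in> edom \<phi>" by fact
  show "0 < 1 / (p * \<gamma>)" using g p by simp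
  fix x assume x: "x \<noteq> xb"
  have fin: "\<phi> xb \<noteq> \<infinity>" "\<phi> xb \<noteq> -\<infinity>" using e pr by (auto simp: edom_def proper_fun_def)
  have "hobj p \<gamma>h \<phi> xb xb \<le> hobj p \<gamma>h \<phi> xb x" using h by (simp add: hprox_def argmin_set_def)
  then have 1: "\<phi> xb \<le> \<phi> x + ereal (1 / (p * \<gamma>h) * norm (x - xb) powr p)"
    using p by (simp add: hobj_def norm_minus_commute)
  have pos: "norm (x - xb) powr p > 0" using x by simp
  have lt: "1 / (p * \<gamma>h) * norm (x - xb) powr p < 1 / (p * \<gamma>) * norm (x - xb) powr p"
    using pos g p by (intro mult_strict_right_mono) (simp_all add: field_simps)
  show "\<phi> xb < \<phi> x + ereal (1 / (p * \<gamma>) * norm (x - xb) powr p)"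
  proof (cases "\<phi> x = \<infinity>")
    case True then show ?thesis using fin by simp
  next
    case False
    have "\<phi> x \<noteq> -\<infinity>" using pr by (simp add: proper_fun_def)
    with False lt have "\<phi> x + ereal (1 / (p * \<gamma>h) * norm (x - xb) powr p)
        < \<phi> x + ereal (1 / (p * \<gamma>) * norm (x - xb) powr p)"
      by (intro ereal_add_real_less)
    with 1 show ?thesis by simp
  qed
qed

lemma L4:
  fixes \<phi> :: "'a::real_normed_vector \<Rightarrow> ereal"
  assumes calm: "p_calm p \<phi> M xb" and p: "p > 0" and pr: "proper_fun \<phi>"
  shows "ho_prox_bounded p \<phi>"
proof -
  have M: "M > 0" using calm by (simp add: p_calm_def)
  define \<gamma> where "\<gamma> = 1 / (p * M)"
  have g: "\<gamma> > 0" using M p by (simp add: \<gamma>_def)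
  have "hprox p \<gamma> \<phi> xb = {xb}" using L1[OF calm g] p by (simp add: \<gamma>_def)
  then have "\<forall>y. hobj p \<gamma> \<phi> xb xb \<le> hobj p \<gamma> \<phi> xb y"
    by (auto simp: hprox_def argmin_set_def)
  then have "hobj p \<gamma> \<phi> xb xb \<le> (INF y. hobj p \<gamma> \<phi> xb y)"
    by (auto intro: INF_greatest)
  moreover have "hobj p \<gamma> \<phi> xb xb > -\<infinity>"
    using pr by (simp add: hobj_def proper_fun_def)
  ultimately show ?thesis unfolding ho_prox_bounded_def using g by (meson less_le_trans)
qed

theorem theorem3:
  fixes p :: real and \<phi> :: "real ^ 'n \<Rightarrow> ereal" and xb :: "real ^ 'n"
  assumes "p > 1" and "proper_fun \<phi>" and "lsc_fun \<phi>" and "xb \<in> edom \<phi>"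
  shows "(xb \<in> argmin_set \<phi> \<longrightarrow> (\<forall>M>0. p_calm p \<phi> M xb))
    \<and> (\<forall>\<gamma>>0. hprox p \<gamma> \<phi> xb = {xb} \<longrightarrow> p_calm p \<phi> (1 / (p * \<gamma>)) xb)
    \<and> (\<forall>M. p_calm p \<phi> M xb \<longrightarrow>
          (\<forall>\<gamma>. 0 < \<gamma> \<and> \<gamma> \<le> 1 / (p * M) \<longrightarrow> hprox p \<gamma> \<phi> xb = {xb}))
    \<and> (\<forall>\<gamma>h>0. xb \<in> hprox_fix p \<gamma>h \<phi> \<longrightarrow>
          (\<forall>\<gamma>. 0 < \<gamma> \<and> \<gamma> < \<gamma>h \<longrightarrow>
             hprox p \<gamma> \<phi> xb = {xb} \<and> p_calm p \<phi> (1 / (p * \<gamma>)) xb))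
    \<and> ((\<exists>M. p_calm p \<phi> M xb) \<longrightarrow> ho_prox_bounded p \<phi>)"
proof (intro conjI)
  have p: "p > 0" using assms(1) by simp
  have fin: "\<phi> xb \<noteq> \<infinity>" "\<phi> xb \<noteq> -\<infinity>" using assms(2,4) by (auto simp: edom_def proper_fun_def)
  show "xb \<in> argmin_set \<phi> \<longrightarrow> (\<forall>M>0. p_calm p \<phi> M xb)"
  proof (intro impI allI)
    fix M :: real assume am: "xb \<in> argmin_set \<phi>" and M: "M > 0"
    show "p_calm p \<phi> M xb" unfolding p_calm_def
    proof (intro conjI allI impI)
      show "xb \<in> edom \<phi>" by fact
      show "0 < M" by fact
      fix x assume x: "x \<noteq> xb"
      have le: "\<phi> xb \<le> \<phi> x" using am by (simp add: argmin_set_def)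
      have pos: "M * norm (x - xb) powr p > 0" using x M by simp
      have "\<phi> xb + 0 < \<phi> xb + ereal (M * norm (x - xb) powr p)"
        using ereal_add_real_less[OF fin(2) fin(1) pos] by (simp add: zero_ereal_def)
      also have "\<dots> \<le> \<phi> x + ereal (M * norm (x - xb) powr p)"
        using le by (intro add_right_mono)
      finally show "\<phi> xb < \<phi> x + ereal (M * norm (x - xb) powr p)" by simp
    qed
  qed
  show "\<forall>\<gamma>>0. hprox p \<gamma> \<phi> xb = {xb} \<longrightarrow> p_calm p \<phi> (1 / (p * \<gamma>)) xb"
    using L2 p assms(4) by blast
  show "\<forall>M. p_calm p \<phi> M xb \<longrightarrow>
          (\<forall>\<gamma>. 0 < \<gamma> \<and> \<gamma> \<le> 1 / (p * M) \<longrightarrow> hprox p \<gamma> \<phi> xb = {xb})"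
    using L1 p by blast
  show "\<forall>\<gamma>h>0. xb \<in> hprox_fix p \<gamma>h \<phi> \<longrightarrow>
          (\<forall>\<gamma>. 0 < \<gamma> \<and> \<gamma> < \<gamma>h \<longrightarrow>
             hprox p \<gamma> \<phi> xb = {xb} \<and> p_calm p \<phi> (1 / (p * \<gamma>)) xb)"
  proof (intro allI impI conjI)
    fix \<gamma>h \<gamma> :: real
    assume "\<gamma>h > 0" "xb \<in> hprox_fix p \<gamma>h \<phi>" and g: "0 < \<gamma> \<and> \<gamma> < \<gamma>h"
    then have h: "xb \<in> hprox p \<gamma>h \<phi> xb" by (simp add: hprox_fix_def)
    show c: "p_calm p \<phi> (1 / (p * \<gamma>)) xb"
      using L3[OF h _ _ p assms(4,2)] g by blast
    show "hprox p \<gamma> \<phi> xb = {xb}"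
      using L1[OF c] g p by simp
  qed
  show "(\<exists>M. p_calm p \<phi> M xb) \<longrightarrow> ho_prox_bounded p \<phi>"
    using L4 p assms(2) by blast
qed

end
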